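(* Let $(n_k)_{k\ge1}$ be a strictly increasing sequence of positive integers. There exists an infinite set $\mathcal{K}\subset\mathbb{N}$ such that the set $$L\Big(\{m\in\mathbb{N}: m\ge2\}\setminus\bigcup_{k\in\mathcal{K}}\{m\in\mathbb{N}: n_k\le m<n_{k+1}\}\Big)$$ is lineable.
   Context: $\ell^\infty$ is the space of bounded real sequences with the sup norm. For $x\in\ell^\infty$, $L_x$ denotes the set of accumulation points (subsequential limits) of $x$. For a set $A$ of cardinalities, $L(A)=\{x\in\ell^\infty: |L_x|\in A\}$. A subset $Y$ of a vector space is lineable if $Y\cup\{0\}$ contains an infinite-dimensional linear subspace. *)

theory Defs
  imports "HOL-Analysis.Analysis" "HOL-Library.Function_Algebras"
begin

text \<open>Real sequences are functions nat => real; addition and zero are pointwise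
  (Function_Algebras); scalar multiplication is pointwise.\<close>

definition lscale :: "real \<Rightarrow> (nat \<Rightarrow> real) \<Rightarrow> (nat \<Rightarrow> real)" where
  "lscale c x = (\<lambda>i. c * x i)"

definition linfty :: "(nat \<Rightarrow> real) set" where
  "linfty = {x. bounded (range x)}"

definition accpts :: "(nat \<Rightarrow> real) \<Rightarrow> real set" where
  "accpts x = {a. \<exists>r. strict_mono r \<and> (x \<circ> r) \<longlonglongrightarrow> a}"

definition Lset :: "nat set \<Rightarrow> (nat \<Rightarrow> real) set" where
  "Lset A = {x \<in> linfty. finite (accpts x) \<and> card (accpts x) \<in> A}"

definition lineable :: "(nat \<Rightarrow> real) set \<Rightarrow> bool" where
  "lineable Y \<longleftrightarrow> (\<exists>V. module.subspace lscale V \<and> V \<subseteq> Y \<union> {0} \<and>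
      \<not> (\<exists>B. finite B \<and> V \<subseteq> module.span lscale B))"

end

theory Submission
  imports Defs
begin

lemma vs_lscale: "vector_space lscale"
  by unfold_locales (auto simp: lscale_def fun_eq_iff algebra_simps)

lemma sum_fun_apply: "(\<Sum>a\<in>A. (f a :: nat \<Rightarrow> real)) i = (\<Sum>a\<in>A. f a i)"
  by (induction A rule: infinite_finite_induct) auto

lemma nmono_add:
  assumes "strict_mono_on {1..} (n::nat\<Rightarrow>nat)" "1 \<le> a"
  shows "n a + d \<le> n (a + d)"
proof (induction d)
  case 0 then show ?case by simp
next
  case (Suc d)
  have "n (a+d) < n (a + Suc d)" using assms by (intro strict_mono_onD[OF assms(1)]) auto
  then show ?case using Suc by simp
qed

lemma nmono_le:
  assumes "strict_mono_on {1..} (n::nat\<Rightarrow>nat)" "1 \<le> a" "a \<le> c"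
  shows "n a + (c - a) \<le> n c"
  using nmono_add[OF assms(1,2), of "c-a"] assms(3) by simp

lemma accpts_comp:
  fixes g :: "nat \<Rightarrow> real"
  assumes "finite (range g)"
  shows "accpts (\<lambda>i. g (fst (prod_decode i))) = range g"
proof
  show "accpts (\<lambda>i. g (fst (prod_decode i))) \<subseteq> range g"
  proof
    fix a assume "a \<in> accpts (\<lambda>i. g (fst (prod_decode i)))"
    then obtain r where r: "strict_mono r" "((\<lambda>i. g (fst (prod_decode i))) \<circ> r) \<longlonglongrightarrow> a"
      unfolding accpts_def by auto
    show "a \<in> range g"
      by (rule Lim_in_closed_set[OF finite_imp_closed[OF assms] _ _ r(2)]) auto
  qed
next
  show "range g \<subseteq> accpts (\<lambda>i. g (fst (prod_decode i)))"
  proof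
    fix a assume "a \<in> range g"
    then obtain s where s: "a = g s" by auto
    have sm: "strict_mono (\<lambda>t. prod_encode (s, t))"
      unfolding strict_mono_Suc_iff by (simp add: prod_encode_def)
    have "((\<lambda>i. g (fst (prod_decode i))) \<circ> (\<lambda>t. prod_encode (s, t))) = (\<lambda>t. a)"
      using s by (auto simp: fun_eq_iff)
    then show "a \<in> accpts (\<lambda>i. g (fst (prod_decode i)))"
      unfolding accpts_def using sm by (metis (mono_tags) mem_Collect_eq tendsto_const)
  qed
qed


fun bb :: "(nat \<Rightarrow> nat) \<Rightarrow> nat \<Rightarrow> nat" where
  "bb n 0 = 1"
| "bb n (Suc J) = n ((bb n J + 1)^2) - 1"

definition blk :: "(nat \<Rightarrow> nat) \<Rightarrow> nat \<Rightarrow> nat" where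
  "blk n s = (LEAST J. s < bb n (Suc J))"

definition GG :: "(nat \<Rightarrow> nat) \<Rightarrow> (nat \<Rightarrow> real) \<Rightarrow> nat \<Rightarrow> real" where
  "GG n c s = (if 1 \<le> s then c (blk n s) * real (s + 1 - bb n (blk n s)) else 0)"

declare bb.simps(2)[simp del]

context
  fixes n :: "nat \<Rightarrow> nat"
  assumes sm: "strict_mono_on {1..} n" and pos: "\<forall>k\<ge>1. 0 < n k"
begin

lemma n_ge: "1 \<le> k \<Longrightarrow> k \<le> n k"
  using nmono_le[OF sm, of 1 k] pos by auto

lemma n_mono: "1 \<le> a \<Longrightarrow> a \<le> c \<Longrightarrow> n a \<le> n c"
  using nmono_le[OF sm, of a c] by auto

lemma bb_gt: "J + 1 \<le> bb n J"
proof (induction J)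
  case 0 then show ?case by simp
next
  case (Suc J)
  let ?B = "bb n J"
  have "(?B+1)^2 \<le> n ((?B+1)^2)" by (rule n_ge) simp
  moreover have "?B + 2 \<le> (?B+1)^2" using Suc by (simp add: power2_eq_square)
  ultimately show ?case using Suc by (simp add: bb.simps)
qed

lemma bb_less: "bb n J < bb n (Suc J)"
proof -
  let ?B = "bb n J"
  have "(?B+1)^2 \<le> n ((?B+1)^2)" by (rule n_ge) simp
  moreover have "?B + 2 \<le> (?B+1)^2" using bb_gt[of J] by (simp add: power2_eq_square)
  ultimately show ?thesis by (simp add: bb.simps)
qed

lemma bb_sm: "strict_mono (bb n)"
  unfolding strict_mono_Suc_iff using bb_less by blast

lemma blk_props:
  assumes "1 \<le> s"
  shows "bb n (blk n s) \<le> s \<and> s < bb n (Suc (blk n s))"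
proof -
  have ex: "s < bb n (Suc s)" using bb_gt[of "Suc s"] by simp
  have 1: "s < bb n (Suc (blk n s))" unfolding blk_def by (rule LeastI[of "\<lambda>J. s < bb n (Suc J)", OF ex])
  have 2: "bb n (blk n s) \<le> s"
  proof (cases "blk n s")
    case 0 then show ?thesis using assms by simp
  next
    case (Suc J)
    have "\<not> s < bb n (Suc J)"
    proof
      assume "s < bb n (Suc J)"
      then have "blk n s \<le> J" unfolding blk_def by (rule Least_le)
      then show False using Suc by simp
    qed
    then show ?thesis using Suc by simp
  qed
  show ?thesis using 1 2 by simp
qed

lemma blk_eq:
  assumes "bb n J \<le> s" "s < bb n (Suc J)"
  shows "blk n s = J"
proof -
  have s1: "1 \<le> s" using assms(1) bb_gt[of J] by simp
  note p = blk_props[OF s1]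
  have "blk n s \<le> J" unfolding blk_def by (rule Least_le) (rule assms(2))
  moreover have "\<not> blk n s < J"
  proof
    assume "blk n s < J"
    then have "Suc (blk n s) \<le> J" by simp
    then have "bb n (Suc (blk n s)) \<le> bb n J" using bb_sm by (simp add: strict_mono_less_eq)
    then show False using p assms(1) by simp
  qed
  ultimately show ?thesis by simp
qed

lemma M_mem:
  assumes "bb n (Suc J) - bb n J + 1 \<le> m" "m \<le> bb n (Suc J)"
  shows "m \<in> {m. 2 \<le> m} - (\<Union>k\<in>(\<lambda>i. i^2) ` {1..}. {m. n k \<le> m \<and> m < n (Suc k)})"
proof -
  define B where "B = bb n J"
  have B1: "1 \<le> B" using bb_gt[of J] by (simp add: B_def)
  have eqS: "bb n (Suc J) = n ((B+1)^2) - 1" by (simp add: B_def bb.simps)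
  have sq: "(B+1)^2 = (B^2+1) + 2*B" by (simp add: power2_eq_square algebra_simps)
  have key: "n (B^2+1) + 2*B \<le> n ((B+1)^2)"
    using nmono_le[OF sm, of "B^2+1" "(B+1)^2"] sq by simp
  have nB: "B^2+1 \<le> n (B^2+1)" by (rule n_ge) simp
  have m_lo: "n (B^2+1) + B \<le> m" using assms(1) key eqS B1 unfolding B_def[symmetric] by linarith
  have m_hi: "m < n ((B+1)^2)" using assms(2) eqS key B1 by simp
  have "2 \<le> m" using m_lo nB B1 by (simp add: power2_eq_square)
  moreover have "\<not> (n k \<le> m \<and> m < n (Suc k))" if "k = j^2" "1 \<le> j" for k j
  proof (cases "j \<le> B")
    case True
    then have "j^2 \<le> B^2" by (simp add: power_mono)
    then have "n (Suc k) \<le> n (B^2+1)" using that by (intro n_mono) auto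
    then show ?thesis using m_lo by simp
  next
    case False
    then have "(B+1)^2 \<le> j^2" by (intro power_mono) auto
    then have "n ((B+1)^2) \<le> n k" using that by (intro n_mono) auto
    then show ?thesis using m_hi by simp
  qed
  ultimately show ?thesis by auto
qed

lemma GG_block:
  assumes "bb n J \<le> s" "s < bb n (Suc J)"
  shows "GG n c s = c J * real (s + 1 - bb n J)"
proof -
  have "1 \<le> s" using assms(1) bb_gt[of J] by simp
  then show ?thesis using blk_eq[OF assms] by (simp add: GG_def)
qed

lemma card_range:
  assumes fin: "finite {j. c j \<noteq> 0}" and nz: "c J \<noteq> 0" and J: "J = Max {j. c j \<noteq> 0}"
  shows "finite (range (GG n c)) \<and> bb n (Suc J) - bb n J + 1 \<le> card (range (GG n c))
     \<and> card (range (GG n c)) \<le> bb n (Suc J)"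
proof -
  have hi: "GG n c s = 0" if s: "bb n (Suc J) \<le> s" for s
  proof -
    have s1: "1 \<le> s" using s bb_gt[of "Suc J"] by simp
    note p = blk_props[OF s1]
    have "J < blk n s"
    proof (rule ccontr)
      assume "\<not> J < blk n s"
      then have "Suc (blk n s) \<le> Suc J" by simp
      then have "bb n (Suc (blk n s)) \<le> bb n (Suc J)" using bb_sm by (simp add: strict_mono_less_eq)
      then show False using p s by simp
    qed
    then have "c (blk n s) = 0" using J fin Max_ge[OF fin, of "blk n s"] by (metis mem_Collect_eq not_le)
    then show ?thesis by (simp add: GG_def)
  qed
  have g0: "GG n c 0 = 0" by (simp add: GG_def)
  have b0: "0 < bb n (Suc J)" using bb_gt[of "Suc J"] by simp
  have sub: "range (GG n c) \<subseteq> GG n c ` {..<bb n (Suc J)}"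
  proof
    fix y assume "y \<in> range (GG n c)"
    then obtain s where y: "y = GG n c s" by auto
    show "y \<in> GG n c ` {..<bb n (Suc J)}"
    proof (cases "s < bb n (Suc J)")
      case True then show ?thesis using y by auto
    next
      case False then have "y = GG n c 0" using y hi g0 by simp
      then show ?thesis using b0 by auto
    qed
  qed
  have finr: "finite (range (GG n c))" by (rule finite_subset[OF sub]) simp
  have up: "card (range (GG n c)) \<le> bb n (Suc J)"
    using card_mono[OF _ sub] card_image_le[of "{..<bb n (Suc J)}" "GG n c"] by simp
  define T where "T = insert 0 {bb n J..<bb n (Suc J)}"
  have inj: "inj_on (GG n c) T"
  proof (rule inj_onI)
    fix x y assume x: "x \<in> T" and y: "y \<in> T" and e: "GG n c x = GG n c y"
    have v: "GG n c z = (if z = 0 then 0 else c J * real (z + 1 - bb n J))" if "z \<in> T" for z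
      using that GG_block[of J z c] g0 bb_gt[of J] by (auto simp: T_def)
    have pz: "z \<in> T \<Longrightarrow> z \<noteq> 0 \<Longrightarrow> bb n J \<le> z" for z using bb_gt[of J] by (auto simp: T_def)
    show "x = y"
      using e v[OF x] v[OF y] pz[OF x] pz[OF y] nz by (auto split: if_splits)
  qed
  have cT: "card T = bb n (Suc J) - bb n J + 1" using bb_gt[of J] by (simp add: T_def)
  have "card (GG n c ` T) \<le> card (range (GG n c))" by (rule card_mono[OF finr]) auto
  then have lo: "bb n (Suc J) - bb n J + 1 \<le> card (range (GG n c))"
    using card_image[OF inj] cT by simp
  show ?thesis using finr up lo by simp
qed

lemma main_lineable:
  "lineable (Lset ({m. 2 \<le> m} - (\<Union>k\<in>(\<lambda>i. i^2) ` {1..}. {m. n k \<le> m \<and> m < n (Suc k)})))"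
proof -
  interpret vs: vector_space lscale by (rule vs_lscale)
  define M where "M = {m. 2 \<le> m} - (\<Union>k\<in>(\<lambda>i. i^2) ` {1..}. {m. n k \<le> m \<and> m < n (Suc k)})"
  define st where "st = (\<lambda>i::nat. fst (prod_decode i))"
  define V where "V = {x. \<exists>c. finite {j. c j \<noteq> 0} \<and> x = (\<lambda>i. GG n c (st i))}"
  have sub: "vs.subspace V"
    unfolding vs.subspace_def
  proof (intro conjI ballI allI)
    show "0 \<in> V" unfolding V_def
      by (rule CollectI, rule exI[of _ "\<lambda>_. 0"]) (auto simp: GG_def fun_eq_iff)
  next
    fix x y assume "x \<in> V" "y \<in> V"
    then obtain c d where c: "finite {j. c j \<noteq> 0}" "x = (\<lambda>i. GG n c (st i))"
      and d: "finite {j. d j \<noteq> 0}" "y = (\<lambda>i. GG n d (st i))" unfolding V_def by auto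
    have "finite {j. c j + d j \<noteq> 0}"
      by (rule finite_subset[of _ "{j. c j \<noteq> 0} \<union> {j. d j \<noteq> 0}"]) (use c d in auto)
    moreover have "x + y = (\<lambda>i. GG n (\<lambda>j. c j + d j) (st i))"
      using c d by (auto simp: fun_eq_iff GG_def algebra_simps)
    ultimately show "x + y \<in> V" unfolding V_def by (intro CollectI exI[of _ "\<lambda>j. c j + d j"]) blast
  next
    fix a x assume "x \<in> V"
    then obtain c where c: "finite {j. c j \<noteq> 0}" "x = (\<lambda>i. GG n c (st i))" unfolding V_def by auto
    have "finite {j. a * c j \<noteq> 0}"
      by (rule finite_subset[OF _ c(1)]) auto
    moreover have "lscale a x = (\<lambda>i. GG n (\<lambda>j. a * c j) (st i))"
      using c by (auto simp: fun_eq_iff GG_def lscale_def)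
    ultimately show "lscale a x \<in> V" unfolding V_def by (intro CollectI exI[of _ "\<lambda>j. a * c j"]) blast
  qed
  have inL: "V \<subseteq> Lset M \<union> {0}"
  proof
    fix x assume "x \<in> V"
    then obtain c where c: "finite {j. c j \<noteq> 0}" "x = (\<lambda>i. GG n c (st i))" unfolding V_def by auto
    show "x \<in> Lset M \<union> {0}"
    proof (cases "{j. c j \<noteq> 0} = {}")
      case True
      then have "x = 0" using c by (auto simp: fun_eq_iff GG_def)
      then show ?thesis by simp
    next
      case False
      define J where "J = Max {j. c j \<noteq> 0}"
      have nz: "c J \<noteq> 0" using Max_in[OF c(1) False] unfolding J_def by simp
      note cr = card_range[OF c(1) nz J_def]
      have acc: "accpts x = range (GG n c)"
        using accpts_comp[of "GG n c"] cr c(2) unfolding st_def by simp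
      have bd: "bounded (range x)"
        by (rule bounded_subset[OF finite_imp_bounded[of "range (GG n c)"]]) (use cr c(2) in auto)
      have "card (accpts x) \<in> M" unfolding acc M_def using cr by (intro M_mem) auto
      then show ?thesis using acc cr bd unfolding Lset_def linfty_def by auto
    qed
  qed
  define e where "e = (\<lambda>j. (\<lambda>i. GG n (\<lambda>k. if k = j then 1 else 0) (st i)))"
  define p where "p = (\<lambda>j. prod_encode (bb n j, 0))"
  have ev: "e j' (p j) = (if j' = j then 1 else 0)" for j j'
  proof -
    have "st (p j) = bb n j" by (simp add: st_def p_def)
    moreover have "bb n j < bb n (Suc j)" by (rule bb_less)
    ultimately show ?thesis unfolding e_def using GG_block[of j "bb n j"] by simp
  qed
  have einj: "inj e"
  proof (rule injI)
    fix a b assume "e a = e b"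
    then have "e a (p a) = e b (p a)" by simp
    then show "a = b" using ev by (simp split: if_splits)
  qed
  have SV: "range e \<subseteq> V" unfolding V_def e_def by (auto intro!: exI[of _ "\<lambda>k. if k = _ then 1 else 0"])
  have indep: "vs.independent (range e)"
  proof
    assume "vs.dependent (range e)"
    then obtain t u where t: "finite t" "t \<subseteq> range e" "(\<Sum>v\<in>t. lscale (u v) v) = 0" "\<exists>v\<in>t. u v \<noteq> 0"
      unfolding vs.dependent_explicit by blast
    then obtain j where j: "e j \<in> t" "u (e j) \<noteq> 0" by blast
    have "(\<Sum>v\<in>t. lscale (u v) v) (p j) = 0" using t(3) by simp
    then have "(\<Sum>v\<in>t. u v * v (p j)) = 0" by (simp add: sum_fun_apply lscale_def)
    moreover have "(\<Sum>v\<in>t. u v * v (p j)) = (\<Sum>v\<in>t. if v = e j then u v else 0)"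
    proof (rule sum.cong)
      fix v assume "v \<in> t"
      then obtain j' where "v = e j'" using t(2) by auto
      then show "u v * v (p j) = (if v = e j then u v else 0)" using ev einj by (auto simp: inj_eq)
    qed simp
    ultimately show False using j t(1) by (simp add: sum.delta')
  qed
  have notfin: "\<not> (\<exists>B. finite B \<and> V \<subseteq> vs.span B)"
  proof
    assume "\<exists>B. finite B \<and> V \<subseteq> vs.span B"
    then obtain B where "finite B" "V \<subseteq> vs.span B" by blast
    then have "finite (range e)" using vs.independent_span_bound[OF _ indep] SV by blast
    then show False using einj finite_imageD by blast
  qed
  show ?thesis unfolding lineable_def M_def[symmetric] using sub inL notfin by blast
qed

end

theorem proposition2p6:
  fixes n :: "nat \<Rightarrow> nat"
  assumes "strict_mono_on {1..} n"
    and "\<forall>k\<ge>1. 0 < n k"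
  shows "\<exists>K \<subseteq> {1..}. infinite K \<and>
    lineable (Lset ({m. 2 \<le> m} - (\<Union>k\<in>K. {m. n k \<le> m \<and> m < n (Suc k)})))"
proof (intro exI conjI)
  show "(\<lambda>i::nat. i^2) ` {1..} \<subseteq> {1..}" by auto
  have "inj_on (\<lambda>i::nat. i^2) {1..}" by (rule inj_onI) (erule power_eq_imp_eq_base, auto)
  then show "infinite ((\<lambda>i::nat. i^2) ` {1..})"
    using finite_imageD infinite_Ici by blast
  show "lineable (Lset ({m. 2 \<le> m} - (\<Union>k\<in>(\<lambda>i. i^2) ` {1..}. {m. n k \<le> m \<and> m < n (Suc k)})))"
    by (rule main_lineable[OF assms])
qed

end
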